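(* Let $\lambda\in\mathbf{R}$ and $c>0$. Then there exists an integer $l\geq 0$ such that for every $f\in\mathcal{C}^{\lambda\text{-an}}(\mathbf{Z}_p^d,M)$ and every $1\leq i\leq d$ we have $\Delta_{p^l1_i}(f)\in\mathcal{C}^{\lambda\text{-an}}(\mathbf{Z}_p^d,M)$ and $$\mathrm{val}_{\lambda}(\Delta_{p^l 1_i}(f))\geq \mathrm{val}_{\lambda}(f)+c.$$
   Context: A valuation on a ring (or module) is a map $\mathrm{val}$ to $(-\infty,\infty]$ with $\mathrm{val}(x)=\infty$ iff $x=0$, $\mathrm{val}(xy)\geq\mathrm{val}(x)+\mathrm{val}(y)$ (for modules: $\mathrm{val}(rm)\geq \mathrm{val}(r)+\mathrm{val}(m)$) and $\mathrm{val}(x+y)\geq\min(\mathrm{val}(x),\mathrm{val}(y))$. Let $R$ be a $\mathbf{Z}_p$-algebra which is a Tate ring with a valuation $\mathrm{val}_R$ such that $\mathrm{val}_R(p)>0$, and let $M$ be an $R$-module with a compatible valuation $\mathrm{val}_M$. For $\underline{y}\in\mathbf{Z}_p^d$ and $f:\mathbf{Z}_p^d\to M$ put $\Delta_{\underline{y}}(f)(\underline{x})=f(\underline{x}+\underline{y})-f(\underline{x})$. Let $1_i\in\mathbf{Z}_p^d$ be the $i$-th standard basis vector, $\Delta_i=\Delta_{1_i}$, and for $\underline{n}\in\mathbf{Z}_{\geq0}^d$ put $\Delta^{\underline{n}}=\Delta_1^{n_1}\circ\cdots\circ\Delta_d^{n_d}$ and $a_{\underline{n}}(f)=\Delta^{\underline{n}}(f)(\underline{0})$.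 Write $|\underline{n}|=\sum_i n_i$ and $\lfloor p^\lambda\underline{n}\rfloor=\sum_i\lfloor p^\lambda n_i\rfloor$. Let $\mathcal{C}^{\lambda\text{-an}}(\mathbf{Z}_p^d,M)$ be the set of continuous $f:\mathbf{Z}_p^d\to M$ such that $\mathrm{val}_M(a_{\underline{n}}(f))-p^\lambda|\underline{n}|\to\infty$ as $|\underline{n}|\to\infty$, endowed with the valuation $\mathrm{val}_\lambda(f)=\inf_{\underline{n}}\big(\mathrm{val}_M(a_{\underline{n}}(f))-\lfloor p^\lambda\underline{n}\rfloor\big)$. *)

theory Defs
  imports "HOL-Analysis.Analysis"
begin

text \<open>An element x of Z_p is represented by the sequence of its residues x n in {0..<p^n}
  modulo p^n, compatible under reduction.\<close>

definition Zp :: "nat \<Rightarrow> (nat \<Rightarrow> int) set" where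
  "Zp p = {x. \<forall>n. 0 \<le> x n \<and> x n < int p ^ n \<and> x (Suc n) mod (int p ^ n) = x n}"

definition zp_of_int :: "nat \<Rightarrow> int \<Rightarrow> (nat \<Rightarrow> int)" where
  "zp_of_int p k = (\<lambda>n. k mod (int p ^ n))"

definition zp_add :: "nat \<Rightarrow> (nat \<Rightarrow> int) \<Rightarrow> (nat \<Rightarrow> int) \<Rightarrow> (nat \<Rightarrow> int)" where
  "zp_add p x y = (\<lambda>n. (x n + y n) mod (int p ^ n))"

definition zp_mult :: "nat \<Rightarrow> (nat \<Rightarrow> int) \<Rightarrow> (nat \<Rightarrow> int) \<Rightarrow> (nat \<Rightarrow> int)" where
  "zp_mult p x y = (\<lambda>n. (x n * y n) mod (int p ^ n))"

section \<open>Z_p^d: vectors indexed by {0..<d} (index i here corresponds to i+1 in the paper)\<close>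

definition Zpd :: "nat \<Rightarrow> nat \<Rightarrow> (nat \<Rightarrow> nat \<Rightarrow> int) set" where
  "Zpd p d = {x. (\<forall>i<d. x i \<in> Zp p) \<and> (\<forall>i\<ge>d. x i = zp_of_int p 0)}"

definition vadd :: "nat \<Rightarrow> (nat \<Rightarrow> nat \<Rightarrow> int) \<Rightarrow> (nat \<Rightarrow> nat \<Rightarrow> int) \<Rightarrow> (nat \<Rightarrow> nat \<Rightarrow> int)" where
  "vadd p x y = (\<lambda>i. zp_add p (x i) (y i))"

definition scaled_unit :: "nat \<Rightarrow> int \<Rightarrow> nat \<Rightarrow> (nat \<Rightarrow> nat \<Rightarrow> int)" where
  "scaled_unit p k i = (\<lambda>j. if j = i then zp_of_int p k else zp_of_int p 0)"

definition multi_indices :: "nat \<Rightarrow> (nat \<Rightarrow> nat) set" where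
  "multi_indices d = {n. \<forall>i\<ge>d. n i = 0}"

definition is_valuation_ring :: "('r::comm_ring_1 \<Rightarrow> ereal) \<Rightarrow> bool" where
  "is_valuation_ring v \<longleftrightarrow>
     (\<forall>x. v x \<noteq> -\<infinity>) \<and> (\<forall>x. v x = \<infinity> \<longleftrightarrow> x = 0) \<and>
     (\<forall>x y. v (x * y) \<ge> v x + v y) \<and> (\<forall>x y. v (x + y) \<ge> min (v x) (v y))"

definition is_valuation_module ::
  "('r::comm_ring_1 \<Rightarrow> 'm::ab_group_add \<Rightarrow> 'm) \<Rightarrow> ('r \<Rightarrow> ereal) \<Rightarrow> ('m \<Rightarrow> ereal) \<Rightarrow> bool" where
  "is_valuation_module sc vR vM \<longleftrightarrow>
     (\<forall>x. vM x \<noteq> -\<infinity>) \<and> (\<forall>x. vM x = \<infinity> \<longleftrightarrow> x = 0) \<and>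
     (\<forall>r m. vM (sc r m) \<ge> vR r + vM m) \<and> (\<forall>x y. vM (x + y) \<ge> min (vM x) (vM y))"

text \<open>Tate ring (for the valuation topology): there is a topologically nilpotent unit,
  i.e. a unit of positive valuation.\<close>
definition is_tate_valued :: "('r::comm_ring_1 \<Rightarrow> ereal) \<Rightarrow> bool" where
  "is_tate_valued v \<longleftrightarrow> (\<exists>w u. w * u = 1 \<and> v w > 0)"

definition zp_algebra_map :: "nat \<Rightarrow> ((nat \<Rightarrow> int) \<Rightarrow> 'r::comm_ring_1) \<Rightarrow> bool" where
  "zp_algebra_map p \<iota> \<longleftrightarrow>
     \<iota> (zp_of_int p 1) = 1 \<and>
     (\<forall>x\<in>Zp p. \<forall>y\<in>Zp p. \<iota> (zp_add p x y) = \<iota> x + \<iota> y \<and> \<iota> (zp_mult p x y) = \<iota> x * \<iota> y)"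

definition cont_Zpd :: "nat \<Rightarrow> nat \<Rightarrow> ('m::ab_group_add \<Rightarrow> ereal) \<Rightarrow> ((nat \<Rightarrow> nat \<Rightarrow> int) \<Rightarrow> 'm) \<Rightarrow> bool" where
  "cont_Zpd p d vM f \<longleftrightarrow>
     (\<forall>x\<in>Zpd p d. \<forall>N::real. \<exists>k::nat. \<forall>y\<in>Zpd p d.
        (\<forall>i<d. y i k = x i k) \<longrightarrow> vM (f y - f x) \<ge> ereal N)"

definition Delta :: "nat \<Rightarrow> (nat \<Rightarrow> nat \<Rightarrow> int) \<Rightarrow> ((nat \<Rightarrow> nat \<Rightarrow> int) \<Rightarrow> 'm::ab_group_add)
    \<Rightarrow> ((nat \<Rightarrow> nat \<Rightarrow> int) \<Rightarrow> 'm)" where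
  "Delta p y f = (\<lambda>x. f (vadd p x y) - f x)"

definition Delta_multi :: "nat \<Rightarrow> nat \<Rightarrow> (nat \<Rightarrow> nat)
    \<Rightarrow> ((nat \<Rightarrow> nat \<Rightarrow> int) \<Rightarrow> 'm::ab_group_add) \<Rightarrow> ((nat \<Rightarrow> nat \<Rightarrow> int) \<Rightarrow> 'm)" where
  "Delta_multi p d n = foldr (\<lambda>i acc. (Delta p (scaled_unit p 1 i) ^^ n i) \<circ> acc) [0..<d] id"

definition mahler_coeff :: "nat \<Rightarrow> nat \<Rightarrow> (nat \<Rightarrow> nat)
    \<Rightarrow> ((nat \<Rightarrow> nat \<Rightarrow> int) \<Rightarrow> 'm::ab_group_add) \<Rightarrow> 'm" where
  "mahler_coeff p d n f = Delta_multi p d n f (\<lambda>_. zp_of_int p 0)"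

definition lambda_an :: "nat \<Rightarrow> nat \<Rightarrow> ('m::ab_group_add \<Rightarrow> ereal) \<Rightarrow> real
    \<Rightarrow> ((nat \<Rightarrow> nat \<Rightarrow> int) \<Rightarrow> 'm) set" where
  "lambda_an p d vM lam = {f. cont_Zpd p d vM f \<and>
     (\<forall>B::real. \<exists>K::nat. \<forall>n\<in>multi_indices d. (\<Sum>i<d. n i) \<ge> K \<longrightarrow>
        vM (mahler_coeff p d n f) - ereal (real p powr lam * real (\<Sum>i<d. n i)) \<ge> ereal B)}"

definition val_lambda :: "nat \<Rightarrow> nat \<Rightarrow> ('m::ab_group_add \<Rightarrow> ereal) \<Rightarrow> real
    \<Rightarrow> ((nat \<Rightarrow> nat \<Rightarrow> int) \<Rightarrow> 'm) \<Rightarrow> ereal" where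
  "val_lambda p d vM lam f = (INF n\<in>multi_indices d.
      vM (mahler_coeff p d n f) - ereal (of_int (\<Sum>i<d. \<lfloor>real p powr lam * real (n i)\<rfloor>)))"

end

theory Submission
  imports Defs "HOL-Computational_Algebra.Primes"
begin


lemma mod_aux: "((X::int) + (a mod P + b mod P)) mod P = (X + (a+b)) mod P"
  by (metis mod_add_eq mod_add_right_eq)

lemma vadd_su_add:
  "vadd p (vadd p x (scaled_unit p a i)) (scaled_unit p b i) = vadd p x (scaled_unit p (a+b) i)"
  unfolding vadd_def zp_add_def scaled_unit_def zp_of_int_def
  by (simp add: fun_eq_iff mod_add_left_eq add.assoc mod_aux mod_add_right_eq)

lemma vadd_comm2:
  "vadd p (vadd p x y) z = vadd p (vadd p x z) y"
  unfolding vadd_def zp_add_def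
  by (simp add: fun_eq_iff mod_simps ac_simps)

lemma Delta_comm: "Delta p y (Delta p z f) = Delta p z (Delta p y f)"
  unfolding Delta_def by (simp add: fun_eq_iff vadd_comm2[of p _ y z] algebra_simps)

lemma Delta_comm_o: "Delta p y \<circ> Delta p z = Delta p z \<circ> Delta p y"
  by (simp add: fun_eq_iff Delta_comm[of p y z])

lemma funpow_comm1:
  assumes "g \<circ> h = h \<circ> g" shows "(g ^^ a) \<circ> h = h \<circ> (g ^^ a)"
proof (induction a)
  case (Suc a)
  have "(g ^^ Suc a) \<circ> h = g \<circ> ((g ^^ a) \<circ> h)" by (simp add: o_assoc)
  also have "\<dots> = g \<circ> (h \<circ> (g ^^ a))" by (simp only: Suc.IH)
  also have "\<dots> = (g \<circ> h) \<circ> (g ^^ a)" by (simp only: o_assoc)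
  also have "\<dots> = (h \<circ> g) \<circ> (g ^^ a)" by (simp only: assms)
  also have "\<dots> = h \<circ> (g ^^ Suc a)" by (simp only: o_assoc funpow.simps)
  finally show ?case .
qed simp

lemma funpow_comm2: "g \<circ> h = h \<circ> g \<Longrightarrow> (g ^^ a) \<circ> (h ^^ b) = (h ^^ b) \<circ> (g ^^ a)"
  by (metis funpow_comm1)

definition DM where "DM p L n = foldr (\<lambda>i acc. (Delta p (scaled_unit p 1 i) ^^ n i) \<circ> acc) L id"

lemma DM_Cons: "DM p (j # L) n = (Delta p (scaled_unit p 1 j) ^^ n j) \<circ> DM p L n"
  by (simp add: DM_def)

lemma DM_comm:
  fixes G :: "((nat \<Rightarrow> nat \<Rightarrow> int) \<Rightarrow> 'm::ab_group_add) \<Rightarrow> ((nat \<Rightarrow> nat \<Rightarrow> int) \<Rightarrow> 'm)"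
  assumes "\<And>j. G \<circ> Delta p (scaled_unit p 1 j) = Delta p (scaled_unit p 1 j) \<circ> G"
  shows "G \<circ> DM p L n = DM p L n \<circ> G"
proof (induction L)
  case Nil then show ?case by (simp add: DM_def)
next
  case (Cons j L)
  have c: "G \<circ> (Delta p (scaled_unit p 1 j) ^^ n j) = (Delta p (scaled_unit p 1 j) ^^ n j) \<circ> G"
    using funpow_comm1[of "Delta p (scaled_unit p 1 j)" G "n j"] assms[of j] by simp
  have "G \<circ> DM p (j # L) n = (G \<circ> (Delta p (scaled_unit p 1 j) ^^ n j)) \<circ> DM p L n"
    by (simp add: DM_Cons o_assoc)
  also have "\<dots> = (Delta p (scaled_unit p 1 j) ^^ n j) \<circ> (G \<circ> DM p L n)"
    using c by (simp add: o_assoc)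
  also have "\<dots> = DM p (j # L) n \<circ> G" using Cons.IH by (metis DM_Cons comp_assoc)
  finally show ?case .
qed

lemma DM_cong: "(\<And>j. j \<in> set L \<Longrightarrow> n j = m j) \<Longrightarrow> DM p L n = DM p L m"
  by (induction L) (auto simp: DM_def)

lemma DM_shift:
  assumes "i \<in> set L" "distinct L"
  shows "DM p L (n(i := n i + k)) = (Delta p (scaled_unit p 1 i) ^^ k) \<circ> (DM p L n :: ((nat \<Rightarrow> nat \<Rightarrow> int) \<Rightarrow> 'm::ab_group_add) \<Rightarrow> _)"
  using assms
proof (induction L)
  case Nil then show ?case by simp
next
  case (Cons j L)
  show ?case
  proof (cases "j = i")
    case True
    then have "i \<notin> set L" using Cons by auto
    then have e: "DM p L (n(i := n i + k)) = (DM p L n :: ((nat \<Rightarrow> nat \<Rightarrow> int) \<Rightarrow> 'm) \<Rightarrow> _)" by (intro DM_cong) auto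
    have "DM p (j # L) (n(i := n i + k)) = (Delta p (scaled_unit p 1 i) ^^ (n i + k)) \<circ> (DM p L (n(i := n i + k)) :: ((nat \<Rightarrow> nat \<Rightarrow> int) \<Rightarrow> 'm) \<Rightarrow> _)"
      using True by (simp add: DM_Cons)
    also have "\<dots> = (Delta p (scaled_unit p 1 i) ^^ (k + n i)) \<circ> DM p L n"
      using e by (metis add.commute)
    also have "\<dots> = (Delta p (scaled_unit p 1 i) ^^ k) \<circ> DM p (j # L) n"
      using True by (simp add: DM_Cons funpow_add o_assoc)
    finally show ?thesis .
  next
    case False
    then have "i \<in> set L" "distinct L" using Cons.prems by auto
    then have e: "DM p L (n(i := n i + k)) = (Delta p (scaled_unit p 1 i) ^^ k) \<circ> (DM p L n :: ((nat \<Rightarrow> nat \<Rightarrow> int) \<Rightarrow> 'm::ab_group_add) \<Rightarrow> _)"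
      using Cons.IH by blast
    have c: "(Delta p (scaled_unit p 1 j) ^^ n j) \<circ> (Delta p (scaled_unit p 1 i) ^^ k :: ((nat \<Rightarrow> nat \<Rightarrow> int) \<Rightarrow> 'm) \<Rightarrow> _)
        = (Delta p (scaled_unit p 1 i) ^^ k) \<circ> (Delta p (scaled_unit p 1 j) ^^ n j)"
      by (rule funpow_comm2[OF Delta_comm_o])
    have "DM p (j # L) (n(i := n i + k)) = (Delta p (scaled_unit p 1 j) ^^ n j) \<circ> (DM p L (n(i := n i + k)) :: ((nat \<Rightarrow> nat \<Rightarrow> int) \<Rightarrow> 'm) \<Rightarrow> _)"
      using False by (simp add: DM_Cons)
    also have "\<dots> = (Delta p (scaled_unit p 1 j) ^^ n j) \<circ> ((Delta p (scaled_unit p 1 i) ^^ k) \<circ> DM p L n)"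
      by (simp only: e)
    also have "\<dots> = (Delta p (scaled_unit p 1 i) ^^ k) \<circ> DM p (j # L) n"
      using c by (simp add: DM_Cons o_assoc)
    finally show ?thesis .
  qed
qed

lemma Delta_multi_DM: "Delta_multi p d n = DM p [0..<d] n"
  by (simp add: Delta_multi_def DM_def)

lemma Delta_pow_add:
  "(Delta p y ^^ k) (\<lambda>x. g x + h x) = (\<lambda>x. (Delta p y ^^ k) g x + (Delta p y ^^ k) h x)"
  by (induction k) (auto simp: Delta_def fun_eq_iff algebra_simps)



context module begin

lemma pascal_sum:
  "(\<Sum>k\<le>N. scale (of_nat (N choose k)) ((u k + u (Suc k)))) = (\<Sum>k\<le>Suc N. scale (of_nat (Suc N choose k)) (u k))"
proof -
  have s1: "(\<Sum>k\<le>N. scale (of_nat (N choose k)) (u k)) = u 0 + (\<Sum>k\<le>N. scale (of_nat (N choose Suc k)) (u (Suc k)))"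
  proof -
    have "(\<Sum>k\<le>Suc N. scale (of_nat (N choose k)) (u k)) = (\<Sum>k\<le>N. scale (of_nat (N choose k)) (u k))"
      by (simp add: binomial_eq_0)
    moreover have "(\<Sum>k\<le>Suc N. scale (of_nat (N choose k)) (u k)) = u 0 + (\<Sum>k\<le>N. scale (of_nat (N choose Suc k)) (u (Suc k)))"
      by (subst sum.atMost_Suc_shift) simp
    ultimately show ?thesis by simp
  qed
  have "(\<Sum>k\<le>Suc N. scale (of_nat (Suc N choose k)) (u k))
      = u 0 + (\<Sum>k\<le>N. scale (of_nat (Suc N choose Suc k)) (u (Suc k)))"
    by (subst sum.atMost_Suc_shift) simp
  also have "\<dots> = u 0 + (\<Sum>k\<le>N. scale (of_nat (N choose k)) (u (Suc k))) + (\<Sum>k\<le>N. scale (of_nat (N choose Suc k)) (u (Suc k)))"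
    by (simp add: scale_left_distrib sum.distrib add.assoc)
  also have "\<dots> = (\<Sum>k\<le>N. scale (of_nat (N choose k)) ((u k + u (Suc k))))"
    by (simp add: s1 scale_right_distrib sum.distrib ac_simps)
  finally show ?thesis by simp
qed

lemma binom_shift:
  "g (vadd p x (scaled_unit p (int N) i)) =
     (\<Sum>k\<le>N. scale (of_nat (N choose k)) ((Delta p (scaled_unit p 1 i) ^^ k) g (vadd p x (scaled_unit p 0 i))))"
proof (induction N arbitrary: g)
  case 0
  then show ?case by simp
next
  case (Suc N)
  let ?D = "Delta p (scaled_unit p 1 i)"
  let ?z = "vadd p x (scaled_unit p 0 i)"
  have v: "vadd p x (scaled_unit p (int (Suc N)) i) = vadd p (vadd p x (scaled_unit p (int N) i)) (scaled_unit p 1 i)"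
    by (simp add: vadd_su_add add.commute)
  have E: "(\<lambda>y. g (vadd p y (scaled_unit p 1 i))) = (\<lambda>y. g y + ?D g y)"
    by (simp add: Delta_def fun_eq_iff)
  have "g (vadd p x (scaled_unit p (int (Suc N)) i)) = (\<lambda>y. g (vadd p y (scaled_unit p 1 i))) (vadd p x (scaled_unit p (int N) i))"
    by (subst v) simp
  also have "\<dots> = (\<Sum>k\<le>N. scale (of_nat (N choose k)) ((?D ^^ k) (\<lambda>y. g y + ?D g y) ?z))"
    by (subst Suc.IH) (simp add: E)
  also have "\<dots> = (\<Sum>k\<le>N. scale (of_nat (N choose k)) (((?D ^^ k) g ?z + (?D ^^ Suc k) g ?z)))"
    by (simp add: Delta_pow_add funpow_swap1)
  also have "\<dots> = (\<Sum>k\<le>Suc N. scale (of_nat (Suc N choose k)) ((?D ^^ k) g ?z))"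
    by (rule pascal_sum)
  finally show ?case .
qed

lemma Delta_big_at0:
  "Delta p (scaled_unit p (int N) i) g (\<lambda>_. zp_of_int p 0) =
     (\<Sum>k<N. scale (of_nat (N choose Suc k)) ((Delta p (scaled_unit p 1 i) ^^ Suc k) g (\<lambda>_. zp_of_int p 0)))"
proof -
  have z: "vadd p (\<lambda>_. zp_of_int p 0) (scaled_unit p 0 i) = (\<lambda>_. zp_of_int p 0)"
    by (simp add: vadd_def zp_add_def scaled_unit_def zp_of_int_def fun_eq_iff)
  have b: "g (vadd p (\<lambda>_. zp_of_int p 0) (scaled_unit p (int N) i)) =
     (\<Sum>k\<le>N. scale (of_nat (N choose k)) ((Delta p (scaled_unit p 1 i) ^^ k) g (\<lambda>_. zp_of_int p 0)))"
    using binom_shift[of g p "\<lambda>_. zp_of_int p 0" N i] by (simp only: z)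
  show ?thesis
    unfolding Delta_def[of p "scaled_unit p (int N) i"] b
    by (simp add: sum.atMost_shift)
qed

end

lemma mahler_Delta_big:
  assumes "module sc" "i < d"
  shows "mahler_coeff p d n (Delta p (scaled_unit p (int N) i) f) =
    (\<Sum>k<N. sc (of_nat (N choose Suc k)) (mahler_coeff p d (n(i := n i + Suc k)) f))"
proof -
  let ?T = "Delta p (scaled_unit p (int N) i)"
  have "?T \<circ> DM p [0..<d] n = DM p [0..<d] n \<circ> ?T"
    by (rule DM_comm) (rule Delta_comm_o)
  then have "DM p [0..<d] n (?T f) = ?T (DM p [0..<d] n f)"
    by (metis comp_apply)
  moreover have "DM p [0..<d] (n(i := n i + Suc k)) f = (Delta p (scaled_unit p 1 i) ^^ Suc k) (DM p [0..<d] n f)" for k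
  proof -
    have "DM p [0..<d] (n(i := n i + Suc k)) = (Delta p (scaled_unit p 1 i) ^^ Suc k) \<circ> DM p [0..<d] n"
      by (rule DM_shift) (use assms(2) in auto)
    then show ?thesis by (metis comp_apply)
  qed
  ultimately show ?thesis
    unfolding mahler_coeff_def Delta_multi_DM
    using module.Delta_big_at0[OF assms(1)] by simp
qed



lemma binom_prime_power_dvd:
  fixes p l k :: nat
  assumes "prime p" "1 \<le> k" "k \<le> p ^ l"
  shows "p ^ (l - k) dvd (p ^ l choose k)"
proof -
  define C where "C = p ^ l choose k"
  have p2: "p \<ge> 2" using assms(1) prime_ge_2_nat by blast
  have kc: "k * C = p ^ l * ((p ^ l - 1) choose (k - 1))"
    unfolding C_def using assms(2) times_binomial_minus1_eq by simp
  obtain u where ku: "k = p ^ multiplicity p k * u" "\<not> p dvd u"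
    using multiplicity_decompose'[of k p] assms(1,2) by (metis not_one_le_zero not_prime_unit)
  define a where "a = multiplicity p k"
  have "p ^ a \<le> k" using ku assms(2) unfolding a_def
    by (metis dvd_imp_le dvd_triv_left less_le_trans zero_less_one)
  then have "a < k" using p2
    by (meson less_le_trans order.strict_trans1 self_le_power less_exp power_mono zero_le_numeral) 
  have "p ^ a \<le> p ^ l" using \<open>p ^ a \<le> k\<close> assms(3) by linarith
  then have al: "a \<le> l" using p2 power_le_imp_le_exp by fastforce
  have "p ^ a * p ^ (l - a) dvd p ^ a * (u * C)"
    using kc ku(1) al unfolding a_def[symmetric]
    by (metis dvd_triv_left mult.assoc power_add le_add_diff_inverse)
  then have "p ^ (l - a) dvd u * C" using p2 by simp
  moreover have "coprime (p ^ (l - a)) u"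
    using ku(2) assms(1) by (simp add: prime_imp_coprime)
  ultimately have "p ^ (l - a) dvd C" using coprime_dvd_mult_right_iff by blast
  moreover have "p ^ (l - k) dvd p ^ (l - a)" using \<open>a < k\<close> by (simp add: le_imp_power_dvd)
  ultimately show ?thesis unfolding C_def by (meson dvd_trans)
qed



lemma le_minus_ereal: "(x \<le> z - ereal r) \<longleftrightarrow> x + ereal r \<le> z"
  by (rule ereal_le_minus) simp

locale vm =
  fixes sc :: "'r::comm_ring_1 \<Rightarrow> 'm::ab_group_add \<Rightarrow> 'm" and valR valM
  assumes md: "module sc" and vmod: "is_valuation_module sc valR valM"
begin

lemma v0: "valM 0 = \<infinity>" using vmod by (simp add: is_valuation_module_def)

lemma vadd_ge: "min (valM x) (valM y) \<le> valM (x + y)" using vmod by (simp add: is_valuation_module_def)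

lemma vscale: "valR r + valM x \<le> valM (sc r x)" using vmod by (simp add: is_valuation_module_def)

lemma v_sum:
  assumes "finite S" "\<And>k. k \<in> S \<Longrightarrow> B \<le> valM (g k)"
  shows "B \<le> valM (sum g S)"
  using assms
proof (induction S rule: finite_induct)
  case empty then show ?case by (simp add: v0)
next
  case (insert a S)
  then have "B \<le> min (valM (g a)) (valM (sum g S))" by auto
  also have "\<dots> \<le> valM (g a + sum g S)" by (rule vadd_ge)
  finally show ?case using insert by simp
qed

lemma v_nat: "valM x \<le> valM (sc (of_nat m) x)"
proof (induction m)
  case 0
  then show ?case using module.scale_zero_left[OF md] by (simp add: v0)
next
  case (Suc m)
  have "sc (of_nat (Suc m)) x = x + sc (of_nat m) x"
    using module.scale_left_distrib[OF md, of 1 "of_nat m" x] module.scale_one[OF md] by (simp add: add.commute)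
  then show ?case using vadd_ge[of x "sc (of_nat m) x"] Suc by (simp add: min_def split: if_splits)
qed

lemma v_ppow:
  assumes "ereal \<delta> \<le> valR (of_nat p)"
  shows "ereal (real j * \<delta>) + valM x \<le> valM (sc (of_nat (p ^ j)) x)"
proof (induction j)
  case 0
  then show ?case using module.scale_one[OF md] by simp
next
  case (Suc j)
  have e: "sc (of_nat (p ^ Suc j)) x = sc (of_nat p) (sc (of_nat (p ^ j)) x)"
    using module.scale_scale[OF md] by simp
  have "ereal (real (Suc j) * \<delta>) + valM x = ereal \<delta> + (ereal (real j * \<delta>) + valM x)"
  proof -
    have "ereal (real (Suc j) * \<delta>) = ereal \<delta> + ereal (real j * \<delta>)" by (simp add: algebra_simps)
    then show ?thesis by (metis add.assoc)
  qed
  also have "\<dots> \<le> valR (of_nat p) + valM (sc (of_nat (p ^ j)) x)"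
    by (rule add_mono[OF assms Suc])
  also have "\<dots> \<le> valM (sc (of_nat (p ^ Suc j)) x)" unfolding e by (rule vscale)
  finally show ?case .
qed

lemma v_neg:
  assumes "ereal r \<le> valR (-1)"
  shows "ereal r + valM x \<le> valM (- x)"
proof -
  have "sc (-1) x = - x" using module.scale_minus_left[OF md, of 1 x] module.scale_one[OF md] by simp
  then show ?thesis using add_right_mono[OF assms, of "valM x"] vscale[of "-1" x] by simp
qed

end



lemma Zp_mod:
  assumes "x \<in> Zp p" "m \<le> n"
  shows "x n mod (int p ^ m) = x m"
  using assms(2)
proof (induction n)
  case 0
  have "0 \<le> x 0 \<and> x 0 < int p ^ 0" using assms(1) unfolding Zp_def by blast
  then show ?case using 0 by simp
next
  case (Suc n)
  show ?case
  proof (cases "m = Suc n")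
    case True
    have "0 \<le> x m \<and> x m < int p ^ m" using assms(1) unfolding Zp_def by blast
    then show ?thesis using True by simp
  next
    case False
    then have "m \<le> n" using Suc by simp
    have "x (Suc n) mod int p ^ m = (x (Suc n) mod int p ^ n) mod int p ^ m"
      using \<open>m \<le> n\<close> by (simp add: mod_mod_cancel le_imp_power_dvd)
    also have "\<dots> = x n mod int p ^ m" using assms(1) by (simp add: Zp_def)
    finally show ?thesis using Suc.IH[OF \<open>m \<le> n\<close>] by simp
  qed
qed

lemma zp_add_Zp:
  assumes "x \<in> Zp p" "p > 0"
  shows "zp_add p x (zp_of_int p b) \<in> Zp p"
  unfolding Zp_def zp_add_def zp_of_int_def
proof (intro CollectI allI conjI)
  fix n
  show "0 \<le> (x n + b mod int p ^ n) mod int p ^ n" using assms(2) by simp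
  show "(x n + b mod int p ^ n) mod int p ^ n < int p ^ n" using assms(2) by simp
  have d: "int p ^ n dvd int p ^ Suc n" by simp
  have "(x (Suc n) + b mod int p ^ Suc n) mod int p ^ Suc n mod int p ^ n
      = (x (Suc n) + b mod int p ^ Suc n) mod int p ^ n" by (rule mod_mod_cancel[OF d])
  also have "\<dots> = (x (Suc n) mod int p ^ n + b mod int p ^ Suc n mod int p ^ n) mod int p ^ n"
    by (rule mod_add_eq[symmetric])
  also have "\<dots> = (x n + b mod int p ^ n) mod int p ^ n"
  proof -
    have e1: "x (Suc n) mod int p ^ n = x n" using assms(1) by (simp add: Zp_def)
    have e2: "b mod int p ^ Suc n mod int p ^ n = b mod int p ^ n" by (rule mod_mod_cancel[OF d])
    show ?thesis by (simp only: e1 e2)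
  qed
  finally show "(x (Suc n) + b mod int p ^ Suc n) mod int p ^ Suc n mod int p ^ n =
      (x n + b mod int p ^ n) mod int p ^ n" .
qed

lemma vadd_Zpd:
  assumes "x \<in> Zpd p d" "i < d" "p > 0"
  shows "vadd p x (scaled_unit p a i) \<in> Zpd p d"
proof -
  have "zp_add p (x j) (scaled_unit p a i j) \<in> Zp p" if "j < d" for j
  proof -
    have "x j \<in> Zp p" using assms(1) that by (simp add: Zpd_def)
    then show ?thesis using zp_add_Zp[OF _ assms(3)] by (cases "j = i") (auto simp: scaled_unit_def)
  qed
  moreover have "zp_add p (x j) (scaled_unit p a i j) = zp_of_int p 0" if "j \<ge> d" for j
    using assms that by (auto simp: Zpd_def scaled_unit_def zp_add_def zp_of_int_def fun_eq_iff)
  ultimately show ?thesis by (simp add: Zpd_def vadd_def)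
qed

lemma cont_Delta:
  assumes V: "vm sc valR valM" and r1: "ereal r1 \<le> valR (-1)" and "p > 0" "i < d"
    and cf: "cont_Zpd p d valM f"
  shows "cont_Zpd p d valM (Delta p (scaled_unit p a i) f)"
  unfolding cont_Zpd_def
proof (intro ballI allI)
  fix x and N :: real
  assume x: "x \<in> Zpd p d"
  define s where "s = scaled_unit p a i"
  have x': "vadd p x s \<in> Zpd p d" unfolding s_def by (rule vadd_Zpd[OF x assms(4,3)])
  obtain k1 where k1: "\<forall>y\<in>Zpd p d. (\<forall>j<d. y j k1 = vadd p x s j k1) \<longrightarrow> ereal N \<le> valM (f y - f (vadd p x s))"
    using cf x' unfolding cont_Zpd_def by blast
  obtain k2 where k2: "\<forall>y\<in>Zpd p d. (\<forall>j<d. y j k2 = x j k2) \<longrightarrow> ereal (N - r1) \<le> valM (f y - f x)"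
    using cf x unfolding cont_Zpd_def by blast
  show "\<exists>k. \<forall>y\<in>Zpd p d. (\<forall>j<d. y j k = x j k) \<longrightarrow>
          ereal N \<le> valM (Delta p (scaled_unit p a i) f y - Delta p (scaled_unit p a i) f x)"
  proof (intro exI[of _ "max k1 k2"] ballI impI)
    fix y assume y: "y \<in> Zpd p d" and agree: "\<forall>j<d. y j (max k1 k2) = x j (max k1 k2)"
    have ag: "y j k' = x j k'" if "j < d" "k' \<le> max k1 k2" for j k'
    proof -
      have "y j \<in> Zp p" "x j \<in> Zp p" using x y that by (auto simp: Zpd_def)
      then show ?thesis using Zp_mod[of "y j" p k' "max k1 k2"] Zp_mod[of "x j" p k' "max k1 k2"] agree that
        by simp
    qed
    have y': "vadd p y s \<in> Zpd p d" unfolding s_def by (rule vadd_Zpd[OF y assms(4,3)])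
    have "\<forall>j<d. vadd p y s j k1 = vadd p x s j k1"
      using ag by (simp add: vadd_def zp_add_def)
    then have A: "ereal N \<le> valM (f (vadd p y s) - f (vadd p x s))" using k1 y' by blast
    have "ereal (N - r1) \<le> valM (f y - f x)" using k2 y ag by simp
    then have "ereal r1 + ereal (N - r1) \<le> ereal r1 + valM (f y - f x)" by (rule add_left_mono)
    also have "\<dots> \<le> valM (- (f y - f x))" by (rule vm.v_neg[OF V r1])
    finally have B: "ereal N \<le> valM (- (f y - f x))" by simp
    have "Delta p (scaled_unit p a i) f y - Delta p (scaled_unit p a i) f x
        = (f (vadd p y s) - f (vadd p x s)) + (- (f y - f x))"
      unfolding Delta_def s_def by (simp add: algebra_simps)
    moreover have "min (valM (f (vadd p y s) - f (vadd p x s))) (valM (- (f y - f x)))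
        \<le> valM ((f (vadd p y s) - f (vadd p x s)) + (- (f y - f x)))"
      by (rule vm.vadd_ge[OF V])
    ultimately show "ereal N \<le> valM (Delta p (scaled_unit p a i) f y - Delta p (scaled_unit p a i) f x)"
      using A B by (simp add: min_def split: if_splits)
  qed
qed



lemma sum_upd_nat:
  fixes i d :: nat
  assumes "i < d"
  shows "(\<Sum>j<d. (n(i := n i + m)) j) = (\<Sum>j<d. n j) + (m::nat)"
proof -
  have "(\<Sum>j<d. (n(i := n i + m)) j) = (\<Sum>j<d. n j + (if j = i then m else 0))"
    by (rule sum.cong) auto
  also have "\<dots> = (\<Sum>j<d. n j) + m" using assms by (simp only: sum.distrib) (simp add: sum.delta)
  finally show ?thesis .
qed

lemma sum_upd_floor:
  fixes i d :: nat
  assumes "i < d" "P \<ge> 0"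
  shows "(\<Sum>j<d. \<lfloor>P * real (n j)\<rfloor>) + \<lfloor>P * real m\<rfloor> \<le> (\<Sum>j<d. \<lfloor>P * real ((n(i := n i + m)) j)\<rfloor>)"
proof -
  have "(\<Sum>j<d. \<lfloor>P * real (n j)\<rfloor>) + \<lfloor>P * real m\<rfloor> = (\<Sum>j<d. \<lfloor>P * real (n j)\<rfloor> + (if j = i then \<lfloor>P * real m\<rfloor> else 0))"
    using assms by (simp only: sum.distrib) (simp add: sum.delta)
  also have "\<dots> \<le> (\<Sum>j<d. \<lfloor>P * real ((n(i := n i + m)) j)\<rfloor>)"
  proof (rule sum_mono)
    fix j
    show "\<lfloor>P * real (n j)\<rfloor> + (if j = i then \<lfloor>P * real m\<rfloor> else 0) \<le> \<lfloor>P * real ((n(i := n i + m)) j)\<rfloor>"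
    proof (cases "j = i")
      case True
      have "\<lfloor>P * real (n i)\<rfloor> + \<lfloor>P * real m\<rfloor> \<le> \<lfloor>P * real (n i) + P * real m\<rfloor>" by (rule le_floor_add)
      then show ?thesis using True by (simp add: distrib_left)
    qed simp
  qed
  finally show ?thesis .
qed

theorem lemma2p6:
  fixes p d :: nat and lam c :: real
    and valR :: "'r::comm_ring_1 \<Rightarrow> ereal" and \<iota> :: "(nat \<Rightarrow> int) \<Rightarrow> 'r"
    and sc :: "'r \<Rightarrow> 'm::ab_group_add \<Rightarrow> 'm" and valM :: "'m \<Rightarrow> ereal"
  assumes "prime p"
    and "zp_algebra_map p \<iota>"
    and "is_valuation_ring valR" and "is_tate_valued valR" and "valR (of_nat p) > 0"
    and "module sc" and "is_valuation_module sc valR valM"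
    and "c > 0"
  shows "\<exists>l::nat. \<forall>f\<in>lambda_an p d valM lam. \<forall>i<d.
           Delta p (scaled_unit p (int p ^ l) i) f \<in> lambda_an p d valM lam \<and>
           val_lambda p d valM lam (Delta p (scaled_unit p (int p ^ l) i) f)
             \<ge> val_lambda p d valM lam f + ereal c"
proof -
  have V: "vm sc valR valM" by (rule vm.intro) (fact assms(6), fact assms(7))
  have p2: "p \<ge> 2" using assms(1) prime_ge_2_nat by blast
  define P where "P = real p powr lam"
  have P0: "P > 0" unfolding P_def using p2 by simp
  obtain \<delta> where \<delta>: "0 < \<delta>" "ereal \<delta> \<le> valR (of_nat p)"
    using ereal_dense2[OF assms(5)] by (auto simp: less_imp_le)
  have "valR (-1) \<noteq> -\<infinity>" using assms(3) by (simp add: is_valuation_ring_def)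
  then have "-\<infinity> < valR (-1)" by simp
  then obtain r1 where r1: "ereal r1 \<le> valR (-1)"
    using ereal_dense2 by (metis less_imp_le)
  define K0 :: nat where "K0 = nat \<lceil>(c + 1) / P\<rceil>"
  have K0: "c + 1 \<le> P * real m" if "K0 \<le> m" for m
  proof -
    have "(c + 1) / P \<le> real m" using that unfolding K0_def by linarith
    then show ?thesis using P0 by (simp add: field_simps)
  qed
  define l where "l = K0 + nat \<lceil>c / \<delta>\<rceil>"
  define N where "N = p ^ l"
  define b :: "nat \<Rightarrow> real" where "b m = (if m < K0 then c else 0)" for m
  have bfl: "c \<le> b m + real_of_int \<lfloor>P * real m\<rfloor>" for m
  proof (cases "m < K0")
    case True
    have "0 \<le> \<lfloor>P * real m\<rfloor>" using P0 by simp
    then show ?thesis using True unfolding b_def by simp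
  next
    case False
    then have "c + 1 \<le> P * real m" using K0 by simp
    moreover have "P * real m < real_of_int \<lfloor>P * real m\<rfloor> + 1" by linarith
    moreover have "b m = 0" using False unfolding b_def by simp
    ultimately show ?thesis by linarith
  qed
  have bin: "ereal (b m) + valM x \<le> valM (sc (of_nat (N choose m)) x)" if "1 \<le> m" "m \<le> N" for m x
  proof (cases "m < K0")
    case True
    have "p ^ (l - m) dvd (N choose m)"
      unfolding N_def by (rule binom_prime_power_dvd[OF assms(1)]) (use that N_def in auto)
    then obtain q where q: "N choose m = p ^ (l - m) * q" by blast
    have e: "sc (of_nat (N choose m)) x = sc (of_nat (p ^ (l - m))) (sc (of_nat q) x)"
      using module.scale_scale[OF assms(6)] q by simp
    have "c / \<delta> \<le> real (l - m)" unfolding l_def using True by linarith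
    then have "c \<le> real (l - m) * \<delta>" using \<delta>(1) by (simp add: field_simps)
    then have "ereal (b m) + valM x \<le> ereal (real (l - m) * \<delta>) + valM (sc (of_nat q) x)"
      using True unfolding b_def by (intro add_mono vm.v_nat[OF V]) simp_all
    also have "\<dots> \<le> valM (sc (of_nat (N choose m)) x)"
      unfolding e by (rule vm.v_ppow[OF V \<delta>(2)])
    finally show ?thesis .
  next
    case False
    then show ?thesis unfolding b_def using vm.v_nat[OF V] by simp
  qed
  show ?thesis
  proof (intro exI[of _ l] ballI allI impI conjI)
    fix f i assume f: "f \<in> lambda_an p d valM lam" and i: "i < d"
    have su: "scaled_unit p (int p ^ l) i = scaled_unit p (int N) i" by (simp add: N_def)
    define g where "g = Delta p (scaled_unit p (int N) i) f"
    have mah: "mahler_coeff p d n g =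
        (\<Sum>k<N. sc (of_nat (N choose Suc k)) (mahler_coeff p d (n(i := n i + Suc k)) f))" for n
      unfolding g_def by (rule mahler_Delta_big[OF assms(6) i])
    have mi: "n(i := n i + m) \<in> multi_indices d" if "n \<in> multi_indices d" for n m
      using that i by (auto simp: multi_indices_def)
    have Nk: "1 \<le> Suc k" "Suc k \<le> N" if "k < N" for k using that by auto
    have "g \<in> lambda_an p d valM lam"
      unfolding lambda_an_def
    proof (intro CollectI conjI allI)
      show "cont_Zpd p d valM g"
      proof -
        have "cont_Zpd p d valM f" using f unfolding lambda_an_def by blast
        moreover have "p > 0" using p2 by simp
        ultimately show ?thesis unfolding g_def by (rule cont_Delta[OF V r1 _ i, rotated])
      qed
    next
      fix B :: real
      obtain K where K: "\<forall>n\<in>multi_indices d. K \<le> (\<Sum>i<d. n i) \<longrightarrow>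
          ereal B \<le> valM (mahler_coeff p d n f) - ereal (real p powr lam * real (\<Sum>i<d. n i))"
        using f unfolding lambda_an_def by blast
      show "\<exists>K. \<forall>n\<in>multi_indices d. K \<le> (\<Sum>i<d. n i) \<longrightarrow>
          ereal B \<le> valM (mahler_coeff p d n g) - ereal (real p powr lam * real (\<Sum>i<d. n i))"
      proof (intro exI[of _ K] ballI impI)
        fix n assume n: "n \<in> multi_indices d" and nK: "K \<le> (\<Sum>i<d. n i)"
        have "ereal (B + P * real (\<Sum>j<d. n j)) \<le> valM (mahler_coeff p d n g)"
          unfolding mah
        proof (rule vm.v_sum[OF V], simp)
          fix k assume "k \<in> {..<N}"
          let ?n' = "n(i := n i + Suc k)"
          have s': "(\<Sum>j<d. ?n' j) = (\<Sum>j<d. n j) + Suc k" by (rule sum_upd_nat[OF i])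
          have "K \<le> (\<Sum>j<d. ?n' j)" using nK s' by simp
          from K[rule_format, OF mi[OF n] this]
          have "ereal B \<le> valM (mahler_coeff p d ?n' f) - ereal (P * real (\<Sum>j<d. ?n' j))"
            unfolding P_def .
          then have "ereal B + ereal (P * real (\<Sum>j<d. ?n' j)) \<le> valM (mahler_coeff p d ?n' f)"
            by (simp add: le_minus_ereal)
          moreover have "P * real (\<Sum>j<d. n j) \<le> P * real (\<Sum>j<d. ?n' j)"
            using P0 s' by simp
          moreover have "ereal (B + P * real (\<Sum>j<d. n j)) \<le> ereal B + ereal (P * real (\<Sum>j<d. ?n' j))"
            using calculation(2) by simp
          ultimately have "ereal (B + P * real (\<Sum>j<d. n j)) \<le> valM (mahler_coeff p d ?n' f)"
            using order_trans by blast
          also have "\<dots> \<le> valM (sc (of_nat (N choose Suc k)) (mahler_coeff p d ?n' f))"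
            by (rule vm.v_nat[OF V])
          finally show "ereal (B + P * real (\<Sum>j<d. n j)) \<le> valM (sc (of_nat (N choose Suc k)) (mahler_coeff p d ?n' f))" .
        qed
        then show "ereal B \<le> valM (mahler_coeff p d n g) - ereal (real p powr lam * real (\<Sum>i<d. n i))"
          unfolding P_def[symmetric] by (simp add: le_minus_ereal)
      qed
    qed
    then show "Delta p (scaled_unit p (int p ^ l) i) f \<in> lambda_an p d valM lam"
      unfolding su g_def .
    define Vf where "Vf = val_lambda p d valM lam f"
    define F where "F n = (\<Sum>j<d. \<lfloor>P * real (n j)\<rfloor>)" for n
    have "Vf + ereal c \<le> val_lambda p d valM lam g"
      unfolding val_lambda_def
    proof (rule INF_greatest)
      fix n assume n: "n \<in> multi_indices d"
      have "Vf + ereal c + ereal (of_int (F n)) \<le> valM (mahler_coeff p d n g)"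
        unfolding mah
      proof (rule vm.v_sum[OF V], simp)
        fix k assume k: "k \<in> {..<N}"
        let ?n' = "n(i := n i + Suc k)"
        have "Vf \<le> valM (mahler_coeff p d ?n' f) - ereal (of_int (F ?n'))"
          unfolding Vf_def val_lambda_def F_def P_def by (rule INF_lower) (rule mi[OF n])
        then have A: "Vf + ereal (of_int (F ?n')) \<le> valM (mahler_coeff p d ?n' f)"
          by (simp add: le_minus_ereal)
        have Fn: "F n + \<lfloor>P * real (Suc k)\<rfloor> \<le> F ?n'"
          unfolding F_def by (rule sum_upd_floor[OF i]) (use P0 in simp)
        have real_ineq: "c + of_int (F n) \<le> b (Suc k) + of_int (F ?n')"
          using bfl[of "Suc k"] Fn by linarith
        have "Vf + ereal c + ereal (of_int (F n)) = Vf + ereal (c + of_int (F n))"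
          by (simp add: add.assoc)
        also have "\<dots> \<le> Vf + ereal (b (Suc k) + of_int (F ?n'))"
          using real_ineq by (intro add_left_mono) simp
        also have "\<dots> = ereal (b (Suc k)) + (Vf + ereal (of_int (F ?n')))"
          by (simp add: ac_simps)
        also have "\<dots> \<le> ereal (b (Suc k)) + valM (mahler_coeff p d ?n' f)"
          by (rule add_left_mono[OF A])
        also have "\<dots> \<le> valM (sc (of_nat (N choose Suc k)) (mahler_coeff p d ?n' f))"
          using k by (intro bin) auto
        finally show "Vf + ereal c + ereal (of_int (F n)) \<le> valM (sc (of_nat (N choose Suc k)) (mahler_coeff p d ?n' f))" .
      qed
      then show "Vf + ereal c \<le> valM (mahler_coeff p d n g) - ereal (of_int (\<Sum>i<d. \<lfloor>real p powr lam * real (n i)\<rfloor>))"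
        unfolding F_def P_def by (simp add: le_minus_ereal)
    qed
    then show "val_lambda p d valM lam f + ereal c \<le> val_lambda p d valM lam (Delta p (scaled_unit p (int p ^ l) i) f)"
      unfolding su g_def Vf_def .
  qed
qed

end
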